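(* Let $G$ be a connected finite simple graph of order $n$ with at least one edge and maximum degree $\Delta$. If $\Delta\geq \frac{n-2}{3}$, then $\mathrm{es}_{\Delta}(G)\leq\left\lceil\frac{n}{2}\right\rceil$.
   Context: $\mathrm{es}_{\Delta}(G)$ is the minimum number of edges of $G$ whose removal results in a subgraph with maximum degree $\Delta(G)-1$. *)

theory Defs
  imports Complex_Main
begin

definition simple_graph :: "'a set \<Rightarrow> 'a set set \<Rightarrow> bool" where
  "simple_graph V E \<longleftrightarrow> finite V \<and> (\<forall>e\<in>E. e \<subseteq> V \<and> card e = 2)"

definition degree :: "'a set set \<Rightarrow> 'a \<Rightarrow> nat" where
  "degree E v = card {e\<in>E. v \<in> e}"

definition max_degree :: "'a set \<Rightarrow> 'a set set \<Rightarrow> nat" where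
  "max_degree V E = Max (insert 0 (degree E ` V))"

definition connected_graph :: "'a set \<Rightarrow> 'a set set \<Rightarrow> bool" where
  "connected_graph V E \<longleftrightarrow> V \<noteq> {} \<and>
     (\<forall>u\<in>V. \<forall>v\<in>V. \<exists>p. p \<noteq> [] \<and> hd p = u \<and> last p = v \<and>
        (\<forall>i < length p - 1. {p ! i, p ! Suc i} \<in> E))"

definition es_Delta :: "'a set \<Rightarrow> 'a set set \<Rightarrow> nat" where
  "es_Delta V E = (LEAST k. \<exists>F \<subseteq> E. card F = k \<and> max_degree V (E - F) = max_degree V E - 1)"

end

theory Submission
  imports Defs
begin


definition mtch :: "'a set set \<Rightarrow> 'a set set \<Rightarrow> bool" where
  "mtch A M \<longleftrightarrow> M \<subseteq> A \<and> (\<forall>e\<in>M. \<forall>f\<in>M. e \<noteq> f \<longrightarrow> e \<inter> f = {})"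

definition maxm :: "'a set set \<Rightarrow> 'a set set \<Rightarrow> bool" where
  "maxm A M \<longleftrightarrow> mtch A M \<and> (\<forall>M'. mtch A M' \<longrightarrow> card M' \<le> card M)"

definition gadj :: "'a set set \<Rightarrow> 'a set \<Rightarrow> ('a \<times> 'a) set" where
  "gadj A Z = {(x,y). {x,y} \<in> A \<and> x \<in> Z \<and> y \<in> Z}"

lemma maxm_exists:
  assumes "finite A"
  shows "\<exists>M. maxm A M"
proof -
  have "mtch A {}" by (simp add: mtch_def)
  moreover have "\<forall>M. mtch A M \<longrightarrow> card M < card A + 1"
    using assms by (auto simp: mtch_def intro: card_mono le_imp_less_Suc)
  ultimately obtain M where "mtch A M" "\<forall>y. mtch A y \<longrightarrow> card y \<le> card M"
    using ex_has_greatest_nat[of "mtch A" "{}" card "card A + 1"] by blast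
  then show ?thesis unfolding maxm_def by blast
qed

lemma mtch_finite: "finite A \<Longrightarrow> mtch A M \<Longrightarrow> finite M"
  unfolding mtch_def using finite_subset by blast

lemma card_Union_mtch:
  assumes "finite A" "\<forall>e\<in>A. card e = 2" "mtch A M"
  shows "card (\<Union>M) = 2 * card M"
proof -
  have fin: "finite M" using mtch_finite assms by blast
  have "\<forall>e\<in>M. finite e" using assms unfolding mtch_def
    by (metis card.infinite subsetD zero_neq_numeral)
  then have "card (\<Union>M) = sum card M"
    using assms(3) by (intro card_Union_disjoint) (auto simp: mtch_def pairwise_def disjnt_def)
  also have "\<dots> = sum (\<lambda>_. 2) M"
    using assms unfolding mtch_def by (intro sum.cong) auto
  finally show ?thesis by simp
qed

lemma mtch_augment:
  assumes "mtch A M" "e \<in> A" "e \<inter> \<Union>M = {}"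
  shows "mtch A (insert e M)"
  using assms unfolding mtch_def by auto

lemma maxm_no_augment:
  assumes "finite A" "\<forall>e\<in>A. card e = 2" "maxm A M" "e \<in> A" "e \<inter> \<Union>M = {}"
  shows False
proof -
  have "e \<noteq> {}" using assms by auto
  then have "e \<notin> M" using assms(5) by auto
  moreover have "finite M" using assms mtch_finite maxm_def by blast
  ultimately have "card (insert e M) = card M + 1" by simp
  moreover have "mtch A (insert e M)" using mtch_augment assms maxm_def by blast
  ultimately show False using assms(3) unfolding maxm_def by fastforce
qed



lemma gallai:
  assumes finW: "finite W" and finA: "finite A" and edges: "\<forall>e\<in>A. e \<subseteq> W \<and> card e = 2"
    and allmiss: "\<forall>w\<in>W. \<exists>N. maxm A N \<and> w \<notin> \<Union>N"
  shows "maxm A M \<Longrightarrow> u \<in> W - \<Union>M \<Longrightarrow> v \<in> W - \<Union>M \<Longrightarrow> u \<noteq> v \<Longrightarrow> (u,v) \<notin> (gadj A W)^^n"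
proof (induction n arbitrary: M u v rule: less_induct)
  case (less n)
  have e2: "\<forall>e\<in>A. card e = 2" using edges by blast
  show ?case
  proof
    assume uv: "(u, v) \<in> gadj A W ^^ n"
    show False
    proof (cases n)
      case 0
      then show False using uv less.prems by simp
    next
      case (Suc m)
      then obtain w where uw: "(u,w) \<in> gadj A W" and wv: "(w,v) \<in> gadj A W ^^ m"
        using uv relpow_Suc_D2 by metis
      have uwA: "{u,w} \<in> A" and wW: "w \<in> W" using uw by (auto simp: gadj_def)
      have "w \<noteq> u" using uwA e2 by fastforce
      have "w \<noteq> v"
      proof
        assume "w = v"
        then have "{u,w} \<inter> \<Union>M = {}" using less.prems by auto
        then show False using maxm_no_augment[OF finA e2 less.prems(1) uwA] by blast
      qed
      then have "m \<noteq> 0" using wv by (metis relpow_0_E)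
      have wM: "w \<in> \<Union>M"
      proof (rule ccontr)
        assume "w \<notin> \<Union>M"
        then have "{u,w} \<inter> \<Union>M = {}" using less.prems by auto
        then show False using maxm_no_augment[OF finA e2 less.prems(1) uwA] by blast
      qed
      obtain N0 where "maxm A N0 \<and> w \<notin> \<Union>N0" using allmiss wW by blast
      then obtain N where N: "maxm A N" "w \<notin> \<Union>N"
        and Nmin: "\<forall>N'. maxm A N' \<and> w \<notin> \<Union>N' \<longrightarrow> card (N - M) \<le> card (N' - M)"
        using ex_has_least_nat[of "\<lambda>N. maxm A N \<and> w \<notin> \<Union>N" N0 "\<lambda>N. card (N - M)"] by blast
      have uN: "u \<in> \<Union>N"
      proof (rule ccontr)
        assume "u \<notin> \<Union>N"
        moreover have "(u,w) \<in> gadj A W ^^ 1" using uw by simp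
        moreover have "1 < n" using Suc \<open>m \<noteq> 0\<close> by simp
        ultimately show False using less.IH[of 1 N u w] N less.prems \<open>w \<noteq> u\<close> wW by auto
      qed
      have vN: "v \<in> \<Union>N"
      proof (rule ccontr)
        assume "v \<notin> \<Union>N"
        moreover have "m < n" using Suc by simp
        ultimately show False using less.IH[of m N w v] N less.prems \<open>w \<noteq> v\<close> wW wv by auto
      qed
      have finM: "finite (\<Union>M)" and finN: "finite (\<Union>N)"
        using less.prems(1) N(1) finW edges unfolding maxm_def mtch_def
        by (meson Union_least finite_subset subset_iff)+
      have "card M = card N" using less.prems(1) N(1) unfolding maxm_def by (simp add: le_antisym)
      then have cU: "card (\<Union>M) = card (\<Union>N)"
        using card_Union_mtch[OF finA e2] less.prems(1) N(1) unfolding maxm_def by metis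
      have "card (\<Union>M - \<Union>N) = card (\<Union>N - \<Union>M)"
        using cU finM finN card_Diff_subset_Int[of "\<Union>M" "\<Union>N"] card_Diff_subset_Int[of "\<Union>N" "\<Union>M"]
        by (simp add: Int_commute)
      moreover have "{u,v} \<subseteq> \<Union>N - \<Union>M" using uN vN less.prems by auto
      moreover have "card {u,v} = 2" using less.prems(4) by simp
      ultimately have "card (\<Union>M - \<Union>N) \<ge> 2"
        using finN by (metis card_mono finite_Diff)
      moreover have "w \<in> \<Union>M - \<Union>N" using wM N by auto
      ultimately have "card (\<Union>M - \<Union>N - {w}) \<ge> 1" using finM by simp
      then obtain z where z: "z \<in> \<Union>M" "z \<notin> \<Union>N" "z \<noteq> w"
        by (metis Diff_iff card.empty ex_in_conv insert_iff not_one_le_zero)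
      then obtain e where e: "e \<in> M" "z \<in> e" by blast
      have eA: "e \<in> A" using e less.prems(1) unfolding maxm_def mtch_def by blast
      then obtain a b where ab: "e = {a,b}" "a \<noteq> b" using e2 card_2_iff by metis
      then obtain y where ezy: "e = {z,y}" "y \<noteq> z" using e(2) by blast
      have yN: "y \<in> \<Union>N"
      proof (rule ccontr)
        assume "y \<notin> \<Union>N"
        then have "e \<inter> \<Union>N = {}" using ezy z by auto
        then show False using maxm_no_augment[OF finA e2 N(1) eA] by blast
      qed
      then obtain f where f: "f \<in> N" "y \<in> f" by blast
      have "f \<noteq> e" using f z ezy by auto
      have fM: "f \<notin> M"
      proof
        assume "f \<in> M"
        then have "f \<inter> e = {}" using less.prems(1) e(1) \<open>f \<noteq> e\<close> unfolding maxm_def mtch_def by blast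
        then show False using f ezy by auto
      qed
      define N' where "N' = insert e (N - {f})"
      have NmA: "mtch A N" using N unfolding maxm_def by blast
      have mN': "mtch A N'"
        unfolding N'_def mtch_def
      proof (intro conjI ballI impI)
        show "insert e (N - {f}) \<subseteq> A" using eA NmA unfolding mtch_def by blast
      next
        fix g h assume g: "g \<in> insert e (N - {f})" and h: "h \<in> insert e (N - {f})" and gh: "g \<noteq> h"
        have disj: "e \<inter> k = {}" if k: "k \<in> N - {f}" for k
        proof -
          have "z \<notin> k" using z k by blast
          moreover have "y \<notin> k" using f k NmA unfolding mtch_def by blast
          ultimately show ?thesis using ezy by auto
        qed
        show "g \<inter> h = {}"
          using g h gh disj NmA unfolding mtch_def by blast
      qed
      have finN0: "finite N" using NmA finA mtch_finite by blast
      have "e \<notin> N" using e z by blast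
      then have cN': "card N' = card N" unfolding N'_def using finN0 f
        by (metis card_Diff1_less card_Suc_Diff1 finite_Diff card.insert Diff_iff)
      have maxN': "maxm A N'" using mN' N(1) cN' unfolding maxm_def by simp
      have "w \<notin> e" using ezy z yN N by auto
      then have wN': "w \<notin> \<Union>N'" using N unfolding N'_def by auto
      have "N' - M = (N - M) - {f}" unfolding N'_def using e by auto
      moreover have "f \<in> N - M" using f fM by blast
      moreover have "finite (N - M)" using finN0 by simp
      ultimately have "card (N' - M) < card (N - M)"
        by (metis card_Diff1_less)
      then show False using Nmin maxN' wN' by fastforce
    qed
  qed
qed



lemma gallai_rtrancl:
  assumes "finite W" "finite A" "\<forall>e\<in>A. e \<subseteq> W \<and> card e = 2"
    "\<forall>w\<in>W. \<exists>N. maxm A N \<and> w \<notin> \<Union>N"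
    "maxm A M" "u \<in> W - \<Union>M" "v \<in> W - \<Union>M" "u \<noteq> v"
  shows "(u,v) \<notin> (gadj A W)\<^sup>*"
  using gallai[OF assms(1-4)] assms(5-8) rtrancl_power by metis

lemma maxm_mtch: "maxm A M \<Longrightarrow> mtch A M" unfolding maxm_def by simp
lemma mtch_sub: "mtch A M \<Longrightarrow> M \<subseteq> A" unfolding mtch_def by simp

lemma tb_weak:
  assumes "finite W" "\<forall>e\<in>A. e \<subseteq> W \<and> card e = 2"
  shows "\<exists>M X R. mtch A M \<and> X \<subseteq> W \<and> R \<subseteq> W - X \<and> card W + card X \<le> 2 * card M + card R
     \<and> (\<forall>r\<in>R. \<forall>r'\<in>R. r \<noteq> r' \<longrightarrow> (r,r') \<notin> (gadj A (W - X))\<^sup>*)"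
  using assms
proof (induction "card W" arbitrary: W A rule: less_induct)
  case less
  have "A \<subseteq> Pow W" using less.prems(2) by blast
  then have finA: "finite A" using less.prems(1) by (meson finite_Pow_iff finite_subset)
  have e2: "\<forall>e\<in>A. card e = 2" using less.prems by blast
  obtain M0 where M0: "maxm A M0" using maxm_exists finA by blast
  show ?case
  proof (cases "\<exists>v\<in>W. \<forall>N. maxm A N \<longrightarrow> v \<in> \<Union>N")
    case True
    then obtain v where v: "v \<in> W" "\<forall>N. maxm A N \<longrightarrow> v \<in> \<Union>N" by blast
    define W' where "W' = W - {v}"
    define A' where "A' = {e\<in>A. v \<notin> e}"
    have cW: "card W = Suc (card W')" unfolding W'_def
      by (rule card_Suc_Diff1[symmetric, OF less.prems(1) v(1)])
    have edges': "\<forall>e\<in>A'. e \<subseteq> W' \<and> card e = 2" using less.prems unfolding A'_def W'_def by blast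
    have lt: "card W' < card W" using cW by simp
    have fW': "finite W'" using less.prems(1) unfolding W'_def by simp
    obtain M' X' R' where IH: "mtch A' M'" "X' \<subseteq> W'" "R' \<subseteq> W' - X'"
      "card W' + card X' \<le> 2 * card M' + card R'"
      "\<forall>r\<in>R'. \<forall>r'\<in>R'. r \<noteq> r' \<longrightarrow> (r,r') \<notin> (gadj A' (W' - X'))\<^sup>*"
      using less.hyps[OF lt fW' edges'] by (elim exE conjE) (rule that; assumption)
    have mA: "mtch A M'" using IH(1) unfolding mtch_def A'_def by blast
    have "card M' \<le> card M0" using M0 mA unfolding maxm_def by simp
    moreover have "card M' \<noteq> card M0"
    proof
      assume "card M' = card M0"
      then have "maxm A M'" using M0 mA unfolding maxm_def by simp
      then have "v \<in> \<Union>M'" using v by blast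
      then show False using IH(1) unfolding mtch_def A'_def by blast
    qed
    ultimately have cM: "card M' + 1 \<le> card M0" by simp
    define X where "X = insert v X'"
    have vX': "v \<notin> X'" using IH(2) unfolding W'_def by blast
    have finX': "finite X'" using IH(2) less.prems(1) unfolding W'_def by (meson finite_Diff finite_subset)
    have cX: "card X = Suc (card X')" unfolding X_def using vX' finX' by simp
    have WX: "W - X = W' - X'" unfolding X_def W'_def by blast
    have gA: "gadj A' (W' - X') = gadj A (W - X)"
      unfolding WX gadj_def A'_def W'_def by auto
    show ?thesis
    proof (intro exI conjI)
      show "mtch A M0" using maxm_mtch[OF M0] .
      show "X \<subseteq> W" using IH(2) v unfolding X_def W'_def by blast
      show "R' \<subseteq> W - X" using IH(3) WX by simp
      show "card W + card X \<le> 2 * card M0 + card R'" using cW cX IH(4) cM by linarith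
      show "\<forall>r\<in>R'. \<forall>r'\<in>R'. r \<noteq> r' \<longrightarrow> (r,r') \<notin> (gadj A (W - X))\<^sup>*" using IH(5) gA by simp
    qed
  next
    case False
    then have allmiss: "\<forall>w\<in>W. \<exists>N. maxm A N \<and> w \<notin> \<Union>N" by simp
    define R where "R = W - \<Union>M0"
    have "M0 \<subseteq> A" using mtch_sub[OF maxm_mtch[OF M0]] .
    then have sub: "\<Union>M0 \<subseteq> W" using less.prems(2) by blast
    have fU: "finite (\<Union>M0)" using sub less.prems(1) finite_subset by blast
    have "card R = card W - card (\<Union>M0)" unfolding R_def using card_Diff_subset[OF fU sub] .
    moreover have "card (\<Union>M0) \<le> card W" using card_mono[OF less.prems(1) sub] .
    ultimately have "card W = card (\<Union>M0) + card R" by simp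
    moreover have "card (\<Union>M0) = 2 * card M0" using card_Union_mtch[OF finA e2 maxm_mtch[OF M0]] .
    ultimately have c: "card W + card {} \<le> 2 * card M0 + card R" by simp
    show ?thesis
    proof (intro exI conjI)
      show "mtch A M0" using maxm_mtch[OF M0] .
      show "{} \<subseteq> W" by simp
      show "R \<subseteq> W - {}" unfolding R_def by blast
      show "card W + card {} \<le> 2 * card M0 + card R" by (rule c)
      show "\<forall>r\<in>R. \<forall>r'\<in>R. r \<noteq> r' \<longrightarrow> (r,r') \<notin> (gadj A (W - {}))\<^sup>*"
        using gallai_rtrancl[OF less.prems(1) finA less.prems(2) allmiss M0] unfolding R_def by simp
    qed
  qed
qed



lemma crossing:
  "p \<noteq> [] \<Longrightarrow> P (hd p) \<Longrightarrow> \<not> P (last p) \<Longrightarrow> \<exists>i < length p - 1. P (p ! i) \<and> \<not> P (p ! Suc i)"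
proof (induction p)
  case Nil then show ?case by simp
next
  case (Cons x xs)
  show ?case
  proof (cases "xs = []")
    case True then show ?thesis using Cons by simp
  next
    case False
    show ?thesis
    proof (cases "P (hd xs)")
      case True
      then obtain i where "i < length xs - 1" "P (xs ! i)" "\<not> P (xs ! Suc i)"
        using Cons.IH False Cons.prems by auto
      then show ?thesis by (intro exI[of _ "Suc i"]) auto
    next
      case f: False
      then show ?thesis using Cons.prems False
        by (intro exI[of _ 0]) (auto simp: hd_conv_nth)
    qed
  qed
qed

lemma gadj_sym: "sym (gadj E Z)"
  unfolding gadj_def sym_def by (auto simp: insert_commute)

lemma rt_in: "(r, v) \<in> (gadj E Z)\<^sup>* \<Longrightarrow> r \<in> Z \<Longrightarrow> v \<in> Z"
  by (induction rule: rtrancl_induct) (auto simp: gadj_def)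

lemma edge2: "card e = 2 \<Longrightarrow> v \<in> e \<Longrightarrow> \<exists>w. w \<noteq> v \<and> e = {v,w}"
  by (metis card_2_iff insert_commute insertE singletonD)

context
  fixes V :: "'a set" and E :: "'a set set" and D :: nat and Y :: "'a set"
  assumes sg: "simple_graph V E" and degle: "\<forall>v\<in>V. degree E v \<le> D"
    and YV: "Y \<subseteq> V" and degZ: "\<forall>v\<in>V - Y. degree E v = D"
begin

lemma finV: "finite V" using sg unfolding simple_graph_def by blast
lemma finE: "finite E"
proof -
  have "E \<subseteq> Pow V" using sg unfolding simple_graph_def by blast
  then show ?thesis using finV by (meson finite_Pow_iff finite_subset)
qed
lemma eV: "e \<in> E \<Longrightarrow> e \<subseteq> V" using sg unfolding simple_graph_def by blast
lemma e2: "e \<in> E \<Longrightarrow> card e = 2" using sg unfolding simple_graph_def by blast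

lemma K_closed:
  assumes "r \<in> V - Y" "(r,v) \<in> (gadj E (V - Y))\<^sup>*" "{v,w} \<in> E" "w \<notin> Y"
  shows "(r,w) \<in> (gadj E (V - Y))\<^sup>*"
proof -
  have "v \<in> V - Y" using rt_in assms by metis
  moreover have "w \<in> V" using eV assms(3) by blast
  ultimately have "(v,w) \<in> gadj E (V - Y)" using assms unfolding gadj_def by blast
  then show ?thesis using assms(2) by simp
qed

lemma sum_B_bound:
  assumes RZ: "R \<subseteq> V - Y" and Kdisj: "\<forall>r\<in>R. \<forall>r'\<in>R. r \<noteq> r' \<longrightarrow> K r \<inter> K r' = {}"
    and KZ: "\<forall>r\<in>R. K r \<subseteq> V - Y"
  shows "(\<Sum>r\<in>R. card {e\<in>E. e \<inter> K r \<noteq> {} \<and> e \<inter> Y \<noteq> {}}) \<le> card Y * D"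
proof -
  let ?B = "\<lambda>r. {e\<in>E. e \<inter> K r \<noteq> {} \<and> e \<inter> Y \<noteq> {}}"
  have finR: "finite R" using RZ finV finite_subset by blast
  have disj: "?B r \<inter> ?B r' = {}" if "r \<in> R" "r' \<in> R" "r \<noteq> r'" for r r'
  proof (rule ccontr)
    assume "?B r \<inter> ?B r' \<noteq> {}"
    then obtain e a b c where e: "e \<in> E" "a \<in> e" "a \<in> K r" "b \<in> e" "b \<in> K r'" "c \<in> e" "c \<in> Y" by blast
    have "a \<noteq> b" using Kdisj that e by blast
    moreover have "a \<noteq> c" "b \<noteq> c" using KZ that e by blast+
    ultimately have "card {a,b,c} = 3" by simp
    moreover have "{a,b,c} \<subseteq> e" using e by blast
    moreover have "finite e" using e2[OF e(1)] by (metis card.infinite zero_neq_numeral)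
    ultimately have "3 \<le> card e" by (metis card_mono)
    then show False using e2[OF e(1)] by simp
  qed
  have "(\<Sum>r\<in>R. card (?B r)) = card (\<Union>r\<in>R. ?B r)"
    using finR disj finE by (intro card_UN_disjoint[symmetric]) auto
  also have "\<dots> \<le> card (\<Union>y\<in>Y. {e\<in>E. y \<in> e})"
    using finE YV finV by (intro card_mono) (auto intro: finite_subset)
  also have "\<dots> \<le> (\<Sum>y\<in>Y. card {e\<in>E. y \<in> e})"
    using card_UN_le YV finV finite_subset by blast
  also have "\<dots> \<le> (\<Sum>y\<in>Y. D)"
    using degle YV unfolding degree_def by (intro sum_mono) auto
  finally show ?thesis by simp
qed

lemma no3: "e \<in> E \<Longrightarrow> a \<in> e \<Longrightarrow> b \<in> e \<Longrightarrow> c \<in> e \<Longrightarrow> a \<noteq> b \<Longrightarrow> a \<noteq> c \<Longrightarrow> b \<noteq> c \<Longrightarrow> False"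
proof -
  assume e: "e \<in> E" "a \<in> e" "b \<in> e" "c \<in> e" and d: "a \<noteq> b" "a \<noteq> c" "b \<noteq> c"
  have "card {a,b,c} = 3" using d by simp
  moreover have "{a,b,c} \<subseteq> e" using e by blast
  moreover have "finite e" using e2[OF e(1)] by (metis card.infinite zero_neq_numeral)
  ultimately have "3 \<le> card e" by (metis card_mono)
  then show False using e2[OF e(1)] by simp
qed

lemma B_ge_D:
  assumes KZ: "K \<subseteq> V - Y" and Kne: "K \<noteq> {}" and Ksm: "card K \<le> D"
    and cl: "\<forall>v\<in>K. \<forall>w. {v,w} \<in> E \<longrightarrow> w \<notin> Y \<longrightarrow> w \<in> K"
  shows "D \<le> card {e\<in>E. e \<inter> K \<noteq> {} \<and> e \<inter> Y \<noteq> {}}"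
proof -
  let ?Bv = "\<lambda>v. {e\<in>E. v \<in> e \<and> e \<inter> Y \<noteq> {}}"
  have finK: "finite K" using KZ finV finite_subset by blast
  have one: "D \<le> card (?Bv v) + (card K - 1)" if v: "v \<in> K" for v
  proof -
    have "degree E v = D" using degZ KZ v by blast
    then have cE: "card {e\<in>E. v \<in> e} = D" unfolding degree_def .
    have sub: "{e\<in>E. v \<in> e} \<subseteq> ?Bv v \<union> (\<lambda>w. {v,w}) ` (K - {v})"
    proof
      fix e assume e: "e \<in> {e\<in>E. v \<in> e}"
      then have eE: "e \<in> E" and ve: "v \<in> e" by simp_all
      obtain w where w: "w \<noteq> v" "e = {v,w}" using edge2[OF e2[OF eE] ve] by blast
      have vwE: "{v,w} \<in> E" using eE w(2) by simp
      show "e \<in> ?Bv v \<union> (\<lambda>w. {v,w}) ` (K - {v})"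
      proof (cases "w \<in> Y")
        case True
        then have "{v,w} \<inter> Y \<noteq> {}" by blast
        then have "{v,w} \<in> ?Bv v" using vwE by simp
        then show ?thesis unfolding w(2) by (rule UnI1)
      next
        case False
        then have "w \<in> K" using cl v vwE by blast
        then have "w \<in> K - {v}" using w(1) by blast
        then have "{v,w} \<in> (\<lambda>w. {v,w}) ` (K - {v})" by (rule imageI)
        then show ?thesis unfolding w(2) by (rule UnI2)
      qed
    qed
    have fin: "finite (?Bv v \<union> (\<lambda>w. {v,w}) ` (K - {v}))" using finE finK by simp
    have "D \<le> card (?Bv v \<union> (\<lambda>w. {v,w}) ` (K - {v}))"
      using card_mono[OF fin sub] unfolding cE .
    also have "\<dots> \<le> card (?Bv v) + card ((\<lambda>w. {v,w}) ` (K - {v}))" by (rule card_Un_le)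
    also have "\<dots> \<le> card (?Bv v) + card (K - {v})" using card_image_le[of "K - {v}" "\<lambda>w. {v,w}"] finK by simp
    also have "\<dots> = card (?Bv v) + (card K - 1)" using v finK by simp
    finally show ?thesis .
  qed
  have disj: "?Bv v \<inter> ?Bv v' = {}" if vv: "v \<in> K" "v' \<in> K" "v \<noteq> v'" for v v'
  proof (rule ccontr)
    assume "?Bv v \<inter> ?Bv v' \<noteq> {}"
    then obtain e where e: "e \<in> ?Bv v \<inter> ?Bv v'" by (meson ex_in_conv)
    then have eE: "e \<in> E" and "v \<in> e" "v' \<in> e" "e \<inter> Y \<noteq> {}" by simp_all
    then obtain c where "c \<in> e" "c \<in> Y" by blast
    then have ec: "e \<in> E" "v \<in> e" "v' \<in> e" "c \<in> e" "c \<in> Y" using eE \<open>v \<in> e\<close> \<open>v' \<in> e\<close> by simp_all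
    have "v \<noteq> c" using KZ vv(1) ec(5) by blast
    moreover have "v' \<noteq> c" using KZ vv(2) ec(5) by blast
    ultimately show False using no3[OF ec(1-4) vv(3)] by blast
  qed
  have Kge1: "card K \<ge> 1" using finK Kne by (simp add: Suc_leI card_gt_0_iff)
  have "(\<Sum>v\<in>K. (D + 1 - card K)) \<le> (\<Sum>v\<in>K. card (?Bv v))"
  proof (rule sum_mono)
    fix v assume "v \<in> K"
    then have "D \<le> card (?Bv v) + (card K - 1)" by (rule one)
    then show "D + 1 - card K \<le> card (?Bv v)" using Kge1 by linarith
  qed
  also have "\<dots> = card (\<Union>v\<in>K. ?Bv v)"
  proof (rule card_UN_disjoint[symmetric])
    show "finite K" by (rule finK)
    show "\<forall>i\<in>K. finite (?Bv i)" using finE by simp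
    show "\<forall>i\<in>K. \<forall>j\<in>K. i \<noteq> j \<longrightarrow> ?Bv i \<inter> ?Bv j = {}" using disj by blast
  qed
  also have "\<dots> \<le> card {e\<in>E. e \<inter> K \<noteq> {} \<and> e \<inter> Y \<noteq> {}}"
  proof (rule card_mono)
    show "finite {e\<in>E. e \<inter> K \<noteq> {} \<and> e \<inter> Y \<noteq> {}}" using finE by simp
    show "(\<Union>v\<in>K. ?Bv v) \<subseteq> {e\<in>E. e \<inter> K \<noteq> {} \<and> e \<inter> Y \<noteq> {}}" by blast
  qed
  finally have *: "card K * (D + 1 - card K) \<le> card {e\<in>E. e \<inter> K \<noteq> {} \<and> e \<inter> Y \<noteq> {}}" by simp
  obtain a where a: "card K = a + 1" using Kge1 by (auto simp: le_iff_add)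
  obtain b where b: "D = card K + b" using Ksm by (auto simp: le_iff_add)
  have "card K * (D + 1 - card K) = (a + 1) * (b + 1)" using a b by simp
  also have "\<dots> = a * b + a + b + 1" by (simp add: algebra_simps)
  finally have "D \<le> card K * (D + 1 - card K)" using a b by simp
  then show ?thesis using * by linarith
qed

lemma B_ge_1:
  assumes conn: "connected_graph V E" and KZ: "K \<subseteq> V - Y" and r: "r \<in> K" and r': "r' \<in> V - K"
    and cl: "\<forall>v\<in>K. \<forall>w. {v,w} \<in> E \<longrightarrow> w \<notin> Y \<longrightarrow> w \<in> K"
  shows "1 \<le> card {e\<in>E. e \<inter> K \<noteq> {} \<and> e \<inter> Y \<noteq> {}}"
proof -
  have "r \<in> V" using r KZ by blast
  then obtain p where p: "p \<noteq> []" "hd p = r" "last p = r'" "\<forall>i < length p - 1. {p ! i, p ! Suc i} \<in> E"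
    using conn r' unfolding connected_graph_def by blast
  then obtain i where i: "i < length p - 1" "p ! i \<in> K" "p ! Suc i \<notin> K"
    using crossing[of p "\<lambda>x. x \<in> K"] r r' by auto
  have eE: "{p ! i, p ! Suc i} \<in> E" using p i by blast
  have "p ! Suc i \<in> Y" using cl i eE by blast
  then have "{p ! i, p ! Suc i} \<in> {e\<in>E. e \<inter> K \<noteq> {} \<and> e \<inter> Y \<noteq> {}}" using eE i by blast
  moreover have "finite {e\<in>E. e \<inter> K \<noteq> {} \<and> e \<inter> Y \<noteq> {}}" using finE by simp
  ultimately have "0 < card {e\<in>E. e \<inter> K \<noteq> {} \<and> e \<inter> Y \<noteq> {}}" using card_gt_0_iff by blast
  then show ?thesis by simp
qed

end



context
  fixes V :: "'a set" and E :: "'a set set" and D :: nat and Y :: "'a set"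
  assumes sg: "simple_graph V E" and degle: "\<forall>v\<in>V. degree E v \<le> D"
    and YV: "Y \<subseteq> V" and degZ: "\<forall>v\<in>V - Y. degree E v = D"
begin

lemma comps_bound:
  assumes conn: "connected_graph V E" and D1: "D \<ge> 1"
    and RZ: "R \<subseteq> V - Y" and Rdis: "\<forall>r\<in>R. \<forall>r'\<in>R. r \<noteq> r' \<longrightarrow> (r,r') \<notin> (gadj E (V - Y))\<^sup>*"
    and cR: "card Y + 2 \<le> card R"
  shows "3 * D + 3 \<le> card V"
proof -
  have finV: "finite V" using sg unfolding simple_graph_def by blast
  have finR: "finite R" using RZ finV finite_subset by blast
  define K where "K r = {v. (r,v) \<in> (gadj E (V - Y))\<^sup>*}" for r
  let ?B = "\<lambda>r. {e\<in>E. e \<inter> K r \<noteq> {} \<and> e \<inter> Y \<noteq> {}}"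
  have KZ: "\<forall>r\<in>R. K r \<subseteq> V - Y"
  proof (intro ballI subsetI)
    fix r v assume "r \<in> R" "v \<in> K r"
    then show "v \<in> V - Y" using rt_in[of r v E "V - Y"] RZ unfolding K_def by blast
  qed
  have rK: "r \<in> K r" for r unfolding K_def by simp
  have cl: "\<forall>v\<in>K r. \<forall>w. {v,w} \<in> E \<longrightarrow> w \<notin> Y \<longrightarrow> w \<in> K r" if r: "r \<in> R" for r
  proof (intro ballI allI impI)
    fix v w assume "v \<in> K r" "{v,w} \<in> E" "w \<notin> Y"
    then show "w \<in> K r" using K_closed[OF sg degle YV degZ, of r v w] r RZ unfolding K_def by blast
  qed
  have symrt: "sym ((gadj E (V - Y))\<^sup>*)" by (rule sym_rtrancl[OF gadj_sym])
  have Kdisj: "\<forall>r\<in>R. \<forall>r'\<in>R. r \<noteq> r' \<longrightarrow> K r \<inter> K r' = {}"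
  proof (intro ballI impI)
    fix r r' assume rr: "r \<in> R" "r' \<in> R" "r \<noteq> r'"
    show "K r \<inter> K r' = {}"
    proof (rule ccontr)
      assume "K r \<inter> K r' \<noteq> {}"
      then obtain v where v: "v \<in> K r" "v \<in> K r'" by blast
      have 1: "(r,v) \<in> (gadj E (V - Y))\<^sup>*" using v(1) unfolding K_def by simp
      have "(r',v) \<in> (gadj E (V - Y))\<^sup>*" using v(2) unfolding K_def by simp
      then have 2: "(v,r') \<in> (gadj E (V - Y))\<^sup>*" using symrt by (rule symD[rotated])
      have "(r,r') \<in> (gadj E (V - Y))\<^sup>*" using rtrancl_trans[OF 1 2] .
      then show False using Rdis rr by blast
    qed
  qed
  have Bsum: "(\<Sum>r\<in>R. card (?B r)) \<le> card Y * D"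
    using sum_B_bound[OF sg degle YV degZ RZ Kdisj KZ] .
  define Rs where "Rs = {r\<in>R. card (K r) \<le> D}"
  define Rb where "Rb = R - Rs"
  have finRs: "finite Rs" and finRb: "finite Rb" using finR unfolding Rs_def Rb_def by simp_all
  have RsRb: "Rs \<inter> Rb = {}" "R = Rs \<union> Rb" unfolding Rs_def Rb_def by blast+
  have cRR: "card R = card Rs + card Rb" using RsRb finRs finRb by (simp add: card_Un_disjoint)
  have Bs: "D \<le> card (?B r)" if r: "r \<in> Rs" for r
  proof -
    have rR: "r \<in> R" and sm: "card (K r) \<le> D" using r unfolding Rs_def by simp_all
    have "K r \<noteq> {}" using rK by blast
    moreover have "K r \<subseteq> V - Y" using KZ rR by blast
    ultimately show ?thesis using B_ge_D[OF sg degle YV degZ _ _ sm cl[OF rR]] by simp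
  qed
  have Bb: "1 \<le> card (?B r)" if rR: "r \<in> R" for r
  proof -
    have "card R \<ge> 2" using cR by simp
    then have "card (R - {r}) \<ge> 1" using rR finR by simp
    then have "R - {r} \<noteq> {}" by (metis card.empty not_one_le_zero)
    then obtain r' where r': "r' \<in> R" "r' \<noteq> r" by blast
    have "(r, r') \<notin> (gadj E (V - Y))\<^sup>*" using Rdis r' rR by simp
    then have "r' \<notin> K r" unfolding K_def by simp
    moreover have "r' \<in> V" using r' RZ by blast
    ultimately have r'V: "r' \<in> V - K r" by blast
    have KrZ: "K r \<subseteq> V - Y" using KZ rR by blast
    show ?thesis by (rule B_ge_1[OF sg degle YV degZ conn KrZ rK r'V cl[OF rR]])
  qed
  have "(\<Sum>r\<in>R. card (?B r)) = (\<Sum>r\<in>Rs. card (?B r)) + (\<Sum>r\<in>Rb. card (?B r))"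
    using RsRb finRs finRb by (simp add: sum.union_disjoint)
  moreover have "(\<Sum>r\<in>Rs. card (?B r)) \<ge> (\<Sum>r\<in>Rs. D)" using Bs by (intro sum_mono) simp
  moreover have "(\<Sum>r\<in>Rb. card (?B r)) \<ge> (\<Sum>r\<in>Rb. 1)" using Bb RsRb by (intro sum_mono) blast
  ultimately have ineq1: "D * card Rs + card Rb \<le> card Y * D" using Bsum by (simp add: mult.commute)
  have bigK: "D + 1 \<le> card (K r)" if "r \<in> Rb" for r using that unfolding Rb_def Rs_def by auto
  have "(\<Sum>r\<in>Rb. D + 1) \<le> (\<Sum>r\<in>Rb. card (K r))" using bigK by (intro sum_mono) blast
  also have "\<dots> = card (\<Union>r\<in>Rb. K r)"
  proof (rule card_UN_disjoint[symmetric])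
    show "finite Rb" by (rule finRb)
    show "\<forall>i\<in>Rb. finite (K i)" using KZ RsRb finV finite_subset by blast
    show "\<forall>i\<in>Rb. \<forall>j\<in>Rb. i \<noteq> j \<longrightarrow> K i \<inter> K j = {}" using Kdisj RsRb by blast
  qed
  also have "\<dots> \<le> card V"
  proof (rule card_mono[OF finV])
    show "(\<Union>r\<in>Rb. K r) \<subseteq> V" using KZ RsRb by blast
  qed
  finally have ineq2: "(D + 1) * card Rb \<le> card V" by (simp add: mult.commute)
  show ?thesis
  proof (cases "card Rb \<ge> 3")
    case True
    have "(D + 1) * 3 \<le> (D + 1) * card Rb" using True by (rule mult_le_mono2)
    then show ?thesis using ineq2 by simp
  next
    case False
    have cs: "card Y + 2 \<le> card Rs + card Rb" using cR cRR by simp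
    have three: "card Rb = 0 \<or> card Rb = 1 \<or> card Rb = 2" using False by linarith
    have i1: "D * card Rs + card Rb \<le> D * card Y" using ineq1 by (simp add: mult.commute)
    show ?thesis using three
    proof (elim disjE)
      assume h: "card Rb = 0"
      then have "card Y + 2 \<le> card Rs" using cs by simp
      then have "D * (card Y + 2) \<le> D * card Rs" by (rule mult_le_mono2)
      then have "D * card Y + 2 * D \<le> D * card Rs" by (simp add: algebra_simps)
      then show ?thesis using i1 h D1 by linarith
    next
      assume h: "card Rb = 1"
      then have "card Y + 1 \<le> card Rs" using cs by simp
      then have "D * (card Y + 1) \<le> D * card Rs" by (rule mult_le_mono2)
      then have "D * card Y + D \<le> D * card Rs" by (simp add: algebra_simps)
      then show ?thesis using i1 h D1 by linarith
    next
      assume h: "card Rb = 2"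
      then have "card Y \<le> card Rs" using cs by simp
      then have "D * card Y \<le> D * card Rs" by (rule mult_le_mono2)
      then show ?thesis using i1 h D1 by linarith
    qed
  qed
qed

end



theorem theorem5p5:
  fixes V :: "'a set" and E :: "'a set set"
  assumes "simple_graph V E"
    and "connected_graph V E"
    and "E \<noteq> {}"
    and "3 * real (max_degree V E) \<ge> real (card V) - 2"
  shows "real (es_Delta V E) \<le> real_of_int \<lceil>real (card V) / 2\<rceil>"
proof -
  note sg = assms(1) and conn = assms(2)
  define D where "D = max_degree V E"
  have finV: "finite V" using sg unfolding simple_graph_def by blast
  have Esub: "E \<subseteq> Pow V" using sg unfolding simple_graph_def by blast
  have finE: "finite E" using Esub finV by (meson finite_Pow_iff finite_subset)
  have e2: "\<forall>e\<in>E. card e = 2" using sg unfolding simple_graph_def by blast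
  have fimg: "finite (insert 0 (degree E ` V))" using finV by simp
  have degle: "\<forall>v\<in>V. degree E v \<le> D"
  proof
    fix v assume "v \<in> V"
    then have "degree E v \<in> insert 0 (degree E ` V)" by simp
    then show "degree E v \<le> D" unfolding D_def max_degree_def using Max_ge[OF fimg] by blast
  qed
  obtain e0 where e0: "e0 \<in> E" using assms(3) by blast
  then obtain a b where ab: "e0 = {a,b}" using e2 card_2_iff by metis
  have aV: "a \<in> V" using e0 ab Esub by blast
  have "{e\<in>E. a \<in> e} \<noteq> {}" using e0 ab by blast
  moreover have "finite {e\<in>E. a \<in> e}" using finE by simp
  ultimately have "card {e\<in>E. a \<in> e} > 0" using card_gt_0_iff by blast
  then have "degree E a \<ge> 1" unfolding degree_def by simp
  then have D1: "D \<ge> 1" using degle aV by (meson le_trans)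
  have "D \<in> insert 0 (degree E ` V)" unfolding D_def max_degree_def using Max_in[OF fimg] by blast
  then obtain s where s: "s \<in> V" "degree E s = D" using D1 by auto
  define S where "S = {v\<in>V. degree E v = D}"
  define A where "A = {e\<in>E. e \<subseteq> S}"
  have SV: "S \<subseteq> V" unfolding S_def by blast
  have finS: "finite S" using SV finV finite_subset by blast
  have sS: "s \<in> S" using s unfolding S_def by blast
  have edgesA: "\<forall>e\<in>A. e \<subseteq> S \<and> card e = 2" using e2 unfolding A_def by blast
  have AE: "A \<subseteq> E" unfolding A_def by blast
  have finA: "finite A" using finE AE finite_subset by blast
  have e2A: "\<forall>e\<in>A. card e = 2" using edgesA by blast
  obtain M X R where tb: "mtch A M" "X \<subseteq> S" "R \<subseteq> S - X" "card S + card X \<le> 2 * card M + card R"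
     "\<forall>r\<in>R. \<forall>r'\<in>R. r \<noteq> r' \<longrightarrow> (r,r') \<notin> (gadj A (S - X))\<^sup>*"
    using tb_weak[OF finS edgesA] by (elim exE conjE) (rule that; assumption)
  have MA: "M \<subseteq> A" using mtch_sub[OF tb(1)] .
  have cUM: "card (\<Union>M) = 2 * card M" using card_Union_mtch[OF finA e2A tb(1)] .
  have UMS: "\<Union>M \<subseteq> S" using MA edgesA by blast
  have c2M: "2 * card M \<le> card S" using card_mono[OF finS UMS] cUM by simp
  have cSV: "card S \<le> card V" using card_mono[OF finV SV] .
  have key: "2 * card S \<le> 2 * card M + card V + 1"
  proof (rule ccontr)
    assume "\<not> 2 * card S \<le> 2 * card M + card V + 1"
    then have big: "2 * card M + card V + 2 \<le> 2 * card S" by simp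
    define Y where "Y = X \<union> (V - S)"
    have YV: "Y \<subseteq> V" unfolding Y_def using tb(2) SV by blast
    have VY: "V - Y = S - X" unfolding Y_def using tb(2) SV by blast
    have finX: "finite X" using tb(2) finS finite_subset by blast
    have "card Y = card X + card (V - S)" unfolding Y_def
      using finX finV tb(2) by (intro card_Un_disjoint) auto
    moreover have "card (V - S) = card V - card S" using card_Diff_subset[OF finS SV] .
    ultimately have cY: "card Y = card X + (card V - card S)" by simp
    have degZ: "\<forall>v\<in>V - Y. degree E v = D" unfolding VY S_def by blast
    have RZ: "R \<subseteq> V - Y" unfolding VY using tb(3) .
    have geq: "gadj A (S - X) = gadj E (V - Y)"
      unfolding VY gadj_def A_def by auto
    have Rdis: "\<forall>r\<in>R. \<forall>r'\<in>R. r \<noteq> r' \<longrightarrow> (r,r') \<notin> (gadj E (V - Y))\<^sup>*"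
      using tb(5) unfolding geq .
    have cR: "card Y + 2 \<le> card R" using cY tb(4) big cSV by linarith
    have "3 * D + 3 \<le> card V" by (rule comps_bound[OF sg degle YV degZ conn D1 RZ Rdis cR])
    then have "3 * real D + 3 \<le> real (card V)" by linarith
    then show False using assms(4) unfolding D_def by linarith
  qed
  define U where "U = S - \<Union>M"
  have exedge: "\<exists>e. e \<in> E \<and> v \<in> e" if "v \<in> S" for v
  proof -
    have "degree E v = D" using that unfolding S_def by blast
    then have "card {e\<in>E. v \<in> e} \<noteq> 0" using D1 unfolding degree_def by simp
    then have "{e\<in>E. v \<in> e} \<noteq> {}" by (metis card.empty)
    then show ?thesis by blast
  qed
  define f where "f v = (SOME e. e \<in> E \<and> v \<in> e)" for v
  have f: "f v \<in> E \<and> v \<in> f v" if "v \<in> S" for v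
    unfolding f_def using someI_ex[OF exedge[OF that]] .
  define F0 where "F0 = M \<union> f ` U"
  have F0E: "F0 \<subseteq> E" unfolding F0_def U_def using MA AE f by blast
  have finF0: "finite F0" using F0E finE finite_subset by blast
  have cov0: "\<forall>v\<in>S. \<exists>e\<in>F0. v \<in> e"
  proof
    fix v assume v: "v \<in> S"
    show "\<exists>e\<in>F0. v \<in> e"
    proof (cases "v \<in> \<Union>M")
      case True then show ?thesis unfolding F0_def by blast
    next
      case False
      then have "v \<in> U" using v unfolding U_def by blast
      then have "f v \<in> F0" unfolding F0_def by blast
      then show ?thesis using f[OF v] by blast
    qed
  qed
  have finU: "finite U" unfolding U_def using finS by simp
  have cU: "card U = card S - 2 * card M" unfolding U_def
    using card_Diff_subset[OF finite_subset[OF UMS finS] UMS] cUM by simp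
  have "card F0 \<le> card M + card (f ` U)" unfolding F0_def by (rule card_Un_le)
  also have "\<dots> \<le> card M + card U" using card_image_le[OF finU, of f] by simp
  finally have cF0: "card F0 \<le> card S - card M" using cU c2M by linarith
  obtain F where F: "F \<subseteq> F0 \<and> (\<forall>v\<in>S. \<exists>e\<in>F. v \<in> e)"
    and Fmin: "\<forall>F'. F' \<subseteq> F0 \<and> (\<forall>v\<in>S. \<exists>e\<in>F'. v \<in> e) \<longrightarrow> card F \<le> card F'"
    using ex_has_least_nat[of "\<lambda>F. F \<subseteq> F0 \<and> (\<forall>v\<in>S. \<exists>e\<in>F. v \<in> e)" F0 card] cov0 by blast
  have FE: "F \<subseteq> E" using F F0E by blast
  have finF: "finite F" using F finF0 finite_subset by blast
  have cF: "card F \<le> card F0" using card_mono[OF finF0] F by blast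
  have le: "degree (E - F) v \<le> D - 1" if v: "v \<in> V" for v
  proof (cases "v \<in> S")
    case True
    then obtain e where e: "e \<in> F" "v \<in> e" using F by blast
    have "{e\<in>E - F. v \<in> e} \<subset> {e\<in>E. v \<in> e}" using e FE by blast
    then have "card {e\<in>E - F. v \<in> e} < card {e\<in>E. v \<in> e}"
      using finE by (intro psubset_card_mono) auto
    moreover have "card {e\<in>E. v \<in> e} = D" using True unfolding S_def degree_def by blast
    ultimately show ?thesis unfolding degree_def by linarith
  next
    case False
    then have "degree E v < D" using degle v unfolding S_def using le_neq_implies_less by blast
    moreover have "card {e\<in>E - F. v \<in> e} \<le> card {e\<in>E. v \<in> e}"
      using finE by (intro card_mono) auto
    ultimately show ?thesis unfolding degree_def by linarith
  qed
  have ex: "\<exists>v\<in>V. degree (E - F) v = D - 1"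
  proof -
    obtain e where e: "e \<in> F" using F sS by blast
    have "card (F - {e}) < card F" by (intro card_Diff1_less[OF finF e])
    have sub: "F - {e} \<subseteq> F0" using F by blast
    have "\<not> (\<forall>v\<in>S. \<exists>e'\<in>F - {e}. v \<in> e')"
    proof
      assume cv: "\<forall>v\<in>S. \<exists>e'\<in>F - {e}. v \<in> e'"
      have "card F \<le> card (F - {e})" using Fmin[rule_format, OF conjI[OF sub cv]] .
      then show False using \<open>card (F - {e}) < card F\<close> by simp
    qed
    then obtain v where v: "v \<in> S" "\<forall>e'\<in>F - {e}. v \<notin> e'" by blast
    obtain e' where e': "e' \<in> F" "v \<in> e'" using F v(1) by blast
    then have "e' = e" using v(2) by blast
    then have ve: "v \<in> e" using e' by simp
    have eq: "{e'\<in>E - F. v \<in> e'} = {e'\<in>E. v \<in> e'} - {e}"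
      using v(2) e by blast
    have "e \<in> {e'\<in>E. v \<in> e'}" using e ve FE by blast
    then have "card ({e'\<in>E. v \<in> e'} - {e}) = card {e'\<in>E. v \<in> e'} - 1"
      using finE by (intro card_Diff_singleton) auto
    moreover have "card {e'\<in>E. v \<in> e'} = D" using v(1) unfolding S_def degree_def by blast
    ultimately have "degree (E - F) v = D - 1" unfolding degree_def eq by simp
    moreover have "v \<in> V" using v(1) SV by blast
    ultimately show ?thesis by blast
  qed
  have md: "max_degree V (E - F) = D - 1"
    unfolding max_degree_def
  proof (rule Max_eqI)
    show "finite (insert 0 (degree (E - F) ` V))" using finV by simp
    show "y \<le> D - 1" if "y \<in> insert 0 (degree (E - F) ` V)" for y using that le by auto
    obtain v where "v \<in> V" "degree (E - F) v = D - 1" using ex by blast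
    then have "D - 1 \<in> degree (E - F) ` V" by (metis imageI)
    then show "D - 1 \<in> insert 0 (degree (E - F) ` V)" by (rule insertI2)
  qed
  have "es_Delta V E \<le> card F"
    unfolding es_Delta_def
  proof (rule Least_le)
    show "\<exists>F'\<subseteq>E. card F' = card F \<and> max_degree V (E - F') = max_degree V E - 1"
      using FE md unfolding D_def by blast
  qed
  then have esle: "es_Delta V E \<le> card S - card M" using cF cF0 by linarith
  define c where "c = \<lceil>real (card V) / 2\<rceil>"
  have "real (card V) / 2 \<le> real_of_int c" unfolding c_def by simp
  then have "real (card V) \<le> 2 * real_of_int c" by simp
  then have "int (card V) \<le> 2 * c" by linarith
  moreover have "int (2 * (card S - card M)) \<le> int (card V) + 1" using key c2M by linarith
  ultimately have "int (card S - card M) \<le> c" by linarith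
  then have "int (es_Delta V E) \<le> c" using esle by linarith
  then have "real (es_Delta V E) \<le> real_of_int c" by linarith
  then show ?thesis unfolding c_def .
qed


end
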